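(* Let $n,m\ge 3$ and let $G=P_n\square P_m$ be the grid graph. Every $3$-minimal $M$ of $G$ has either (i) two vertices $(i,j)$ and $(k,j)$ with $i\neq k$ and a third vertex $(p,q)$ with $i\le p\le k$ and $q\neq j$; or (ii) two vertices $(i,j)$ and $(i,k)$ with $j\neq k$ and a third vertex $(p,q)$ with $j\le q\le k$ and $p\neq i$.
   Context: The grid graph $P_n\square P_m$ has vertex set $\{(i,j):0\le i\le n-1,\ 0\le j\le m-1\}$, with $(i,j)$ adjacent to $(k,l)$ iff $|i-k|+|j-l|=1$; distance $d((i,j),(k,l))=|i-k|+|j-l|$. A vertex $w$ resolves $u,v$ if $d(w,u)\ne d(w,v)$; a set $R$ is resolving if every pair of distinct vertices is resolved by some vertex of $R$; a $3$-minimal is a resolving set $R$ of cardinality $3$ such that no $R\setminus\{x\}$, $x\in R$, is resolving. *)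

theory Defs
  imports Main
begin

definition grid_vertices :: "nat \<Rightarrow> nat \<Rightarrow> (nat \<times> nat) set" where
  "grid_vertices n m = {0..<n} \<times> {0..<m}"

text \<open>Graph distance in the grid: the Manhattan distance.\<close>
definition grid_dist :: "nat \<times> nat \<Rightarrow> nat \<times> nat \<Rightarrow> nat" where
  "grid_dist u v = nat \<bar>int (fst u) - int (fst v)\<bar> + nat \<bar>int (snd u) - int (snd v)\<bar>"

definition resolves :: "nat \<times> nat \<Rightarrow> nat \<times> nat \<Rightarrow> nat \<times> nat \<Rightarrow> bool" where
  "resolves w u v \<longleftrightarrow> grid_dist w u \<noteq> grid_dist w v"

definition resolving_set :: "nat \<Rightarrow> nat \<Rightarrow> (nat \<times> nat) set \<Rightarrow> bool" where
  "resolving_set n m R \<longleftrightarrow> R \<subseteq> grid_vertices n m \<and>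
     (\<forall>u\<in>grid_vertices n m. \<forall>v\<in>grid_vertices n m. u \<noteq> v \<longrightarrow> (\<exists>w\<in>R. resolves w u v))"

definition three_minimal :: "nat \<Rightarrow> nat \<Rightarrow> (nat \<times> nat) set \<Rightarrow> bool" where
  "three_minimal n m R \<longleftrightarrow> resolving_set n m R \<and> card R = 3 \<and>
     (\<forall>x\<in>R. \<not> resolving_set n m (R - {x}))"

end

theory Submission imports Defs begin

definition CI :: "(nat \<times> nat) set \<Rightarrow> bool" where
 "CI M \<longleftrightarrow> (\<exists>i j k p q. (i, j) \<in> M \<and> (k, j) \<in> M \<and> i < k \<and> (p, q) \<in> M \<and>
            i \<le> p \<and> p \<le> k \<and> q \<noteq> j)"
definition CII :: "(nat \<times> nat) set \<Rightarrow> bool" where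
 "CII M \<longleftrightarrow> (\<exists>i j k p q. (i, j) \<in> M \<and> (i, k) \<in> M \<and> j < k \<and> (p, q) \<in> M \<and>
            j \<le> q \<and> q \<le> k \<and> p \<noteq> i)"

lemma unres:
  assumes "resolving_set n m M" "u \<in> grid_vertices n m" "v \<in> grid_vertices n m" "u \<noteq> v"
    "\<forall>w\<in>M. grid_dist w u = grid_dist w v"
  shows False
  using assms unfolding resolving_set_def resolves_def by blast

lemma row_res:
  assumes "b = 0 \<or> b = m - 1" "b < m" "0 < n"
  shows "resolving_set n m {(0,b),(n-1,b)}"
  unfolding resolving_set_def resolves_def grid_vertices_def
proof (intro conjI ballI impI)
  show "{(0, b), (n - 1, b)} \<subseteq> {0..<n} \<times> {0..<m}" using assms by auto
  fix u v assume u: "u \<in> {0..<n} \<times> {0..<m}" and v: "v \<in> {0..<n} \<times> {0..<m}" and uv: "u \<noteq> v"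
  obtain x y x' y' where [simp]: "u = (x,y)" "v = (x',y')" by (cases u, cases v) auto
  show "\<exists>w\<in>{(0, b), (n - 1, b)}. grid_dist w u \<noteq> grid_dist w v"
  proof (rule ccontr)
    assume "\<not> ?thesis"
    then have "grid_dist (0,b) u = grid_dist (0,b) v" "grid_dist (n-1,b) u = grid_dist (n-1,b) v" by auto
    then show False using u v uv assms unfolding grid_dist_def by auto
  qed
qed

lemma col_res:
  assumes "a = 0 \<or> a = n - 1" "a < n" "0 < m"
  shows "resolving_set n m {(a,0),(a,m-1)}"
  unfolding resolving_set_def resolves_def grid_vertices_def
proof (intro conjI ballI impI)
  show "{(a, 0), (a, m - 1)} \<subseteq> {0..<n} \<times> {0..<m}" using assms by auto
  fix u v assume u: "u \<in> {0..<n} \<times> {0..<m}" and v: "v \<in> {0..<n} \<times> {0..<m}" and uv: "u \<noteq> v"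
  obtain x y x' y' where [simp]: "u = (x,y)" "v = (x',y')" by (cases u, cases v) auto
  show "\<exists>w\<in>{(a, 0), (a, m - 1)}. grid_dist w u \<noteq> grid_dist w v"
  proof (rule ccontr)
    assume "\<not> ?thesis"
    then have "grid_dist (a,0) u = grid_dist (a,0) v" "grid_dist (a,m-1) u = grid_dist (a,m-1) v" by auto
    then show False using u v uv assms unfolding grid_dist_def by auto
  qed
qed

lemma pick:
  assumes "finite M" "card M = 3" "p \<in> M" "q \<in> M" "p \<noteq> q"
  shows "\<exists>x\<in>M. M - {x} = {p,q}"
proof -
  have "card (M - {p,q}) = 1" using assms by (simp add: card_Diff_subset)
  then obtain x where x: "M - {p,q} = {x}" by (rule card_1_singletonE)
  then have "x \<in> M" by blast
  moreover have "M - {x} = {p,q}" using x assms by blast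
  ultimately show ?thesis by blast
qed


lemma core:
  fixes a1 b1 a2 b2 a3 b3 n m :: nat
  assumes M: "M = {(a1,b1),(a2,b2),(a3,b3)}"
    and d: "(a1,b1)\<noteq>(a2,b2)" "(a1,b1)\<noteq>(a3,b3)" "(a2,b2)\<noteq>(a3,b3)"
    and ord: "a1 \<le> a2" "a2 \<le> a3"
    and nm: "n\<ge>3" "m\<ge>3"
    and res: "resolving_set n m M"
    and nI: "\<not> CI M" and nII: "\<not> CII M"
  shows "\<exists>x\<in>M. resolving_set n m (M - {x})"
proof -
  have sub: "M \<subseteq> grid_vertices n m" using res unfolding resolving_set_def by blast
  have g: "a1<n" "a2<n" "a3<n" "b1<m" "b2<m" "b3<m" using sub unfolding M grid_vertices_def by auto
  have cM: "card M = 3" using d unfolding M by auto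
  have U: "\<And>u v. u \<in> grid_vertices n m \<Longrightarrow> v \<in> grid_vertices n m \<Longrightarrow> u \<noteq> v \<Longrightarrow>
     grid_dist (a1,b1) u = grid_dist (a1,b1) v \<Longrightarrow> grid_dist (a2,b2) u = grid_dist (a2,b2) v \<Longrightarrow>
     grid_dist (a3,b3) u = grid_dist (a3,b3) v \<Longrightarrow> False"
    using unres[OF res] unfolding M by blast
  note gd = grid_vertices_def grid_dist_def
  consider (A) "a1 < a2" "a2 < a3" | (B) "a1 = a2" "a2 < a3" | (C) "a1 < a2" "a2 = a3" | (D) "a1 = a2" "a2 = a3"
    using ord by linarith
  then show ?thesis
  proof cases
    case A
    have h1: "\<not>(b1 < b2 \<and> b1 < b3)"
    proof
      assume h: "b1 < b2 \<and> b1 < b3"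
      show False by (rule U[of "(a1,b1+1)" "(a1+1,b1)"]) (use A h g nm in \<open>auto simp: gd\<close>)
    qed
    have h2: "\<not>(b1 > b2 \<and> b1 > b3)"
    proof
      assume h: "b1 > b2 \<and> b1 > b3"
      show False by (rule U[of "(a1,max b2 b3)" "(a1+1,max b2 b3+1)"]) (use A h g nm in \<open>auto simp: gd max_def\<close>)
    qed
    have h3: "\<not>(b3 > b1 \<and> b3 > b2)"
    proof
      assume h: "b3 > b1 \<and> b3 > b2"
      show False by (rule U[of "(a2,max b1 b2+1)" "(a2+1,max b1 b2)"]) (use A h g nm in \<open>auto simp: gd max_def\<close>)
    qed
    have h4: "\<not>(b3 < b1 \<and> b3 < b2)"
    proof
      assume h: "b3 < b1 \<and> b3 < b2"
      show False by (rule U[of "(a2,b3)" "(a2+1,b3+1)"]) (use A h g nm in \<open>auto simp: gd\<close>)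
    qed
    consider (row) "b1 = b2" "b2 = b3" | (L) "b1 = b3" "b2 \<noteq> b1"
      using h1 h2 h3 h4 by linarith
    then show ?thesis
    proof cases
      case row
      define b where "b = b1"
      have bb: "b1 = b" "b2 = b" "b3 = b" using row b_def by auto
      have hb: "b = 0 \<or> b = m - 1"
      proof (rule ccontr)
        assume h: "\<not> ?thesis"
        show False by (rule U[of "(0,b-1)" "(0,b+1)"]) (use h g bb nm in \<open>auto simp: gd\<close>)
      qed
      have ha1: "a1 = 0"
      proof (rule ccontr)
        assume h: "a1 \<noteq> 0"
        show False
        proof (cases "b \<le> m - 2")
          case True
          show False by (rule U[of "(0,b)" "(1,b+1)"]) (use h g bb A True nm in \<open>auto simp: gd\<close>)
        next
          case False
          show False by (rule U[of "(0,b)" "(1,b-1)"]) (use h g bb A False nm in \<open>auto simp: gd\<close>)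
        qed
      qed
      have ha3: "a3 = n - 1"
      proof (rule ccontr)
        assume h: "a3 \<noteq> n - 1"
        show False
        proof (cases "b \<le> m - 2")
          case True
          show False by (rule U[of "(n-2,b+1)" "(n-1,b)"]) (use h g bb A True nm in \<open>auto simp: gd\<close>)
        next
          case False
          show False by (rule U[of "(n-2,b-1)" "(n-1,b)"]) (use h g bb A False nm in \<open>auto simp: gd\<close>)
        qed
      qed
      have "\<exists>x\<in>M. M - {x} = {(0,b),(n-1,b)}"
        by (rule pick) (use cM ha1 ha3 bb A nm in \<open>auto simp: M\<close>)
      then obtain x where x: "x \<in> M" "M - {x} = {(0,b),(n-1,b)}" by blast
      have "resolving_set n m {(0,b),(n-1,b)}" by (rule row_res[OF hb]) (use g bb nm in auto)
      then show ?thesis using x by metis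
    next
      case L
      have "CI M" unfolding CI_def
        by (rule exI[of _ a1], rule exI[of _ b1], rule exI[of _ a3], rule exI[of _ a2], rule exI[of _ b2])
           (use A L in \<open>auto simp: M\<close>)
      then show ?thesis using nI by blast
    qed
  next
    case B
    have b12: "b1 \<noteq> b2" using B d by auto
    show ?thesis
    proof -
      have False
      proof (cases "b3 = b1 \<or> b3 = b2")
        case True
        then show False
        proof
          assume h: "b3 = b1"
          have "CI M" unfolding CI_def
            by (rule exI[of _ a1], rule exI[of _ b1], rule exI[of _ a3], rule exI[of _ a1], rule exI[of _ b2])
               (use B h b12 in \<open>auto simp: M\<close>)
          then show False using nI by blast
        next
          assume h: "b3 = b2"
          have "CI M" unfolding CI_def
            by (rule exI[of _ a1], rule exI[of _ b2], rule exI[of _ a3], rule exI[of _ a1], rule exI[of _ b1])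
               (use B h b12 in \<open>auto simp: M\<close>)
          then show False using nI by blast
        qed
      next
        case F: False
        consider (lo) "b3 < b1" "b3 < b2" | (hi) "b3 > b1" "b3 > b2" | (m1) "b1 < b3" "b3 < b2" | (m2) "b2 < b3" "b3 < b1"
          using F b12 by linarith
        then show False
        proof cases
          case lo
          show False by (rule U[of "(a1,b3)" "(a1+1,b3+1)"]) (use B lo g nm in \<open>auto simp: gd\<close>)
        next
          case hi
          show False by (rule U[of "(a1,max b1 b2+1)" "(a1+1,max b1 b2)"]) (use B hi g nm in \<open>auto simp: gd max_def\<close>)
        next
          case m1
          have "CII M" unfolding CII_def
            by (rule exI[of _ a1], rule exI[of _ b1], rule exI[of _ b2], rule exI[of _ a3], rule exI[of _ b3])
               (use B m1 in \<open>auto simp: M\<close>)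
          then show False using nII by blast
        next
          case m2
          have "CII M" unfolding CII_def
            by (rule exI[of _ a1], rule exI[of _ b2], rule exI[of _ b1], rule exI[of _ a3], rule exI[of _ b3])
               (use B m2 in \<open>auto simp: M\<close>)
          then show False using nII by blast
        qed
      qed
      then show ?thesis ..
    qed
  next
    case C
    have b23: "b2 \<noteq> b3" using C d by auto
    have False
    proof (cases "b1 = b2 \<or> b1 = b3")
      case True
      then show False
      proof
        assume h: "b1 = b2"
        have "CI M" unfolding CI_def
          by (rule exI[of _ a1], rule exI[of _ b1], rule exI[of _ a2], rule exI[of _ a2], rule exI[of _ b3])
             (use C h b23 in \<open>auto simp: M\<close>)
        then show False using nI by blast
      next
        assume h: "b1 = b3"
        have "CI M" unfolding CI_def
          by (rule exI[of _ a1], rule exI[of _ b1], rule exI[of _ a2], rule exI[of _ a2], rule exI[of _ b2])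
             (use C h b23 in \<open>auto simp: M\<close>)
        then show False using nI by blast
      qed
    next
      case F: False
      consider (lo) "b1 < b2" "b1 < b3" | (hi) "b1 > b2" "b1 > b3" | (m1) "b2 < b1" "b1 < b3" | (m2) "b3 < b1" "b1 < b2"
        using F b23 by linarith
      then show False
      proof cases
        case lo
        show False by (rule U[of "(a1,b1+1)" "(a1+1,b1)"]) (use C lo g nm in \<open>auto simp: gd\<close>)
      next
        case hi
        show False by (rule U[of "(a1,max b2 b3)" "(a1+1,max b2 b3+1)"]) (use C hi g nm in \<open>auto simp: gd max_def\<close>)
      next
        case m1
        have "CII M" unfolding CII_def
          by (rule exI[of _ a2], rule exI[of _ b2], rule exI[of _ b3], rule exI[of _ a1], rule exI[of _ b1])
             (use C m1 in \<open>auto simp: M\<close>)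
        then show False using nII by blast
      next
        case m2
        have "CII M" unfolding CII_def
          by (rule exI[of _ a2], rule exI[of _ b3], rule exI[of _ b2], rule exI[of _ a1], rule exI[of _ b1])
             (use C m2 in \<open>auto simp: M\<close>)
        then show False using nII by blast
      qed
    qed
    then show ?thesis ..
  next
    case D
    define a where "a = a1"
    have aa: "a1 = a" "a2 = a" "a3 = a" using D a_def by auto
    have bd: "b1 \<noteq> b2" "b1 \<noteq> b3" "b2 \<noteq> b3" using d aa by auto
    have ha: "a = 0 \<or> a = n - 1"
    proof (rule ccontr)
      assume h: "\<not> ?thesis"
      show False by (rule U[of "(a-1,0)" "(a+1,0)"]) (use h g aa nm in \<open>auto simp: gd\<close>)
    qed
    have hmin: "b1 = 0 \<or> b2 = 0 \<or> b3 = 0"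
    proof (rule ccontr)
      assume h: "\<not> ?thesis"
      show False
      proof (cases "a \<le> n - 2")
        case True
        show False by (rule U[of "(a,0)" "(a+1,1)"]) (use h g aa True nm in \<open>auto simp: gd\<close>)
      next
        case False
        show False by (rule U[of "(a-1,1)" "(a,0)"]) (use h g aa False nm in \<open>auto simp: gd\<close>)
      qed
    qed
    have hmax: "b1 = m-1 \<or> b2 = m-1 \<or> b3 = m-1"
    proof (rule ccontr)
      assume h: "\<not> ?thesis"
      define c where "c = max b1 (max b2 b3)"
      show False
      proof (cases "a \<le> n - 2")
        case True
        show False by (rule U[of "(a,c+1)" "(a+1,c)"]) (use h g aa True nm in \<open>auto simp: gd c_def max_def\<close>)
      next
        case False
        show False by (rule U[of "(a-1,c)" "(a,c+1)"]) (use h g aa False nm in \<open>auto simp: gd c_def max_def\<close>)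
      qed
    qed
    have "(a,0) \<in> M" "(a,m-1) \<in> M" using hmin hmax aa unfolding M by auto
    then have "\<exists>x\<in>M. M - {x} = {(a,0),(a,m-1)}"
      by (intro pick) (use cM nm in \<open>auto simp: M\<close>)
    then obtain x where x: "x \<in> M" "M - {x} = {(a,0),(a,m-1)}" by blast
    have "resolving_set n m {(a,0),(a,m-1)}" by (rule col_res[OF ha]) (use g aa nm in auto)
    then show ?thesis using x by metis
  qed
qed


theorem proposition3:
  fixes n m :: nat and M :: "(nat \<times> nat) set"
  assumes "n \<ge> 3" and "m \<ge> 3" and "three_minimal n m M"
  shows "(\<exists>i j k p q. (i, j) \<in> M \<and> (k, j) \<in> M \<and> i < k \<and> (p, q) \<in> M \<and>
            i \<le> p \<and> p \<le> k \<and> q \<noteq> j)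
       \<or> (\<exists>i j k p q. (i, j) \<in> M \<and> (i, k) \<in> M \<and> j < k \<and> (p, q) \<in> M \<and>
            j \<le> q \<and> q \<le> k \<and> p \<noteq> i)"
proof (rule ccontr)
  assume h: "\<not> ?thesis"
  then have nI: "\<not> CI M" and nII: "\<not> CII M" unfolding CI_def CII_def by blast+
  have res: "resolving_set n m M" and c3: "card M = 3"
    and mn: "\<forall>x\<in>M. \<not> resolving_set n m (M - {x})"
    using assms(3) unfolding three_minimal_def by auto
  obtain P Q R where M: "M = {P,Q,R}" and dd: "P \<noteq> Q" "Q \<noteq> R" "P \<noteq> R"
    using c3 unfolding card_3_iff by blast
  obtain a1 b1 a2 b2 a3 b3 where PQR: "P = (a1,b1)" "Q = (a2,b2)" "R = (a3,b3)"
    by (cases P, cases Q, cases R) auto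
  have K: "\<And>c1 d1 c2 d2 c3 d3. M = {(c1,d1),(c2,d2),(c3,d3)} \<Longrightarrow>
      (c1,d1)\<noteq>(c2,d2) \<Longrightarrow> (c1,d1)\<noteq>(c3,d3) \<Longrightarrow> (c2,d2)\<noteq>(c3,d3) \<Longrightarrow>
      c1 \<le> c2 \<Longrightarrow> c2 \<le> c3 \<Longrightarrow> \<exists>x\<in>M. resolving_set n m (M - {x})"
    using core res nI nII assms(1,2) by blast
  have "\<exists>x\<in>M. resolving_set n m (M - {x})"
  proof -
    consider "a1 \<le> a2" "a2 \<le> a3" | "a1 \<le> a3" "a3 \<le> a2" | "a2 \<le> a1" "a1 \<le> a3"
      | "a2 \<le> a3" "a3 \<le> a1" | "a3 \<le> a1" "a1 \<le> a2" | "a3 \<le> a2" "a2 \<le> a1" by linarith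
    then show ?thesis
    proof cases
      case 1 show ?thesis by (rule K[of a1 b1 a2 b2 a3 b3]) (use 1 dd in \<open>auto simp: M PQR\<close>)
    next
      case 2 show ?thesis by (rule K[of a1 b1 a3 b3 a2 b2]) (use 2 dd in \<open>auto simp: M PQR\<close>)
    next
      case 3 show ?thesis by (rule K[of a2 b2 a1 b1 a3 b3]) (use 3 dd in \<open>auto simp: M PQR\<close>)
    next
      case 4 show ?thesis by (rule K[of a2 b2 a3 b3 a1 b1]) (use 4 dd in \<open>auto simp: M PQR\<close>)
    next
      case 5 show ?thesis by (rule K[of a3 b3 a1 b1 a2 b2]) (use 5 dd in \<open>auto simp: M PQR\<close>)
    next
      case 6 show ?thesis by (rule K[of a3 b3 a2 b2 a1 b1]) (use 6 dd in \<open>auto simp: M PQR\<close>)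
    qed
  qed
  then show False using mn by blast
qed

end
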